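(* Let $G=(V,E^+\cup E^-)$ be a signed graph and let $D$ be an almost valid drawing of $G$ in the circumference $\mathcal{C}$. Then $G$ has a valid drawing in $\mathcal{C}$.
   Context: A signed graph $G=(V,E^+\cup E^-)$ is a finite, undirected, connected, loopless graph without parallel edges whose edge set is partitioned into positive edges $E^+$ and negative edges $E^-$ (with $E^+\cap E^-=\emptyset$). For $i\in V$, $N^+(i)=\{j: ij\in E^+\}$ and $N^-(i)=\{j: ij\in E^-\}$. The circumference is $\mathcal{C}=\{(x,y)\in\mathbb{R}^2:\sqrt{x^2+y^2}=1\}$; each point is identified with an angle in $[0,2\pi)$, and the distance between points $p,q$ is the measure of the smaller angle they form with the origin, i.e. for $q\le p$, $d(p,q)=\min\{(p-q)\bmod 2\pi,(2\pi-p+q)\bmod 2\pi\}$. A drawing of $G$ in $\mathcal{C}$ is an injection $D:V\to\mathcal{C}$. A drawing is valid if for all $i\in V$, all $j\in N^+(i)$ and all $k\in N^-(i)$, $d(D(i),D(j))<d(D(i),D(k))$. A drawing is almost valid if there exists $\delta>0$ such that for all $i\in V$, all $j\in N^+(i)$ and all $k\in N^-(i)$, $d(D(i),D(j))\le\delta\le d(D(i),D(k))$. *)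

theory Defs
  imports Complex_Main
begin

definition signed_graph :: "'a set \<Rightarrow> 'a set set \<Rightarrow> 'a set set \<Rightarrow> bool" where
  "signed_graph V Ep En \<longleftrightarrow>
     finite V \<and> V \<noteq> {} \<and>
     (\<forall>e \<in> Ep \<union> En. e \<subseteq> V \<and> card e = 2) \<and>
     Ep \<inter> En = {} \<and>
     (\<forall>u\<in>V. \<forall>v\<in>V. (u, v) \<in> ({(x, y). {x, y} \<in> Ep \<union> En})\<^sup>*)"

definition pos_nbrs :: "'a set set \<Rightarrow> 'a \<Rightarrow> 'a set" where
  "pos_nbrs Ep i = {j. {i, j} \<in> Ep}"

definition neg_nbrs :: "'a set set \<Rightarrow> 'a \<Rightarrow> 'a set" where
  "neg_nbrs En i = {j. {i, j} \<in> En}"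

text \<open>Points of the circumference are identified with angles in [0, 2 pi).
Distance = measure of the smaller angle.\<close>
definition circ_dist :: "real \<Rightarrow> real \<Rightarrow> real" where
  "circ_dist p q = min \<bar>p - q\<bar> (2 * pi - \<bar>p - q\<bar>)"

definition drawing :: "'a set \<Rightarrow> ('a \<Rightarrow> real) \<Rightarrow> bool" where
  "drawing V D \<longleftrightarrow> inj_on D V \<and> D ` V \<subseteq> {0..<2 * pi}"

definition valid_drawing :: "'a set \<Rightarrow> 'a set set \<Rightarrow> 'a set set \<Rightarrow> ('a \<Rightarrow> real) \<Rightarrow> bool" where
  "valid_drawing V Ep En D \<longleftrightarrow> drawing V D \<and>
     (\<forall>i\<in>V. \<forall>j\<in>pos_nbrs Ep i. \<forall>k\<in>neg_nbrs En i.
        circ_dist (D i) (D j) < circ_dist (D i) (D k))"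

definition almost_valid_drawing :: "'a set \<Rightarrow> 'a set set \<Rightarrow> 'a set set \<Rightarrow> ('a \<Rightarrow> real) \<Rightarrow> bool" where
  "almost_valid_drawing V Ep En D \<longleftrightarrow> drawing V D \<and>
     (\<exists>\<delta>>0. \<forall>i\<in>V. \<forall>j\<in>pos_nbrs Ep i. \<forall>k\<in>neg_nbrs En i.
        circ_dist (D i) (D j) \<le> \<delta> \<and> \<delta> \<le> circ_dist (D i) (D k))"

end

theory Submission imports Defs begin

lemma cd_comm: "circ_dist p q = circ_dist q p" by (simp add: circ_dist_def abs_minus_commute)

lemma cd_lip: "\<bar>circ_dist p' q' - circ_dist p q\<bar> \<le> \<bar>(p' - q') - (p - q)\<bar>"
  unfolding circ_dist_def by (simp add: min_def abs_if split: if_splits)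

lemma cd_exact:
  assumes "q - p = d \<or> q - p = d - 2*pi" "0<d" "d<pi" "\<bar>t\<bar> < d" "\<bar>t\<bar> < pi - d" "q' - p' = q - p + t"
  shows "circ_dist p' q' = d + t"
  using assms unfolding circ_dist_def by (auto simp: min_def abs_if)

lemma tight:
  assumes "circ_dist p q = d" "d < pi"
  shows "(q-p = d \<or> q-p = d-2*pi) \<or> (p-q = d \<or> p-q = d-2*pi)"
  using assms unfolding circ_dist_def by (auto simp: min_def abs_if split: if_splits)

lemma cd_le_pi: "circ_dist p q \<le> pi"
  unfolding circ_dist_def by (auto simp: min_def)

lemma cd_pi:
  assumes "circ_dist p q = pi" "p \<in> {0..<2*pi}" "q \<in> {0..<2*pi}"
  shows "\<bar>p - q\<bar> = pi"
  using assms unfolding circ_dist_def by (auto simp: min_def split: if_splits)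

lemma fin_pos: "finite (S::real set) \<Longrightarrow> \<forall>s\<in>S. s > 0 \<Longrightarrow> \<exists>e>0. \<forall>s\<in>S. e < s"
proof (cases "S = {}")
  case True then show ?thesis by (intro exI[of _ 1]) auto
next
  case False
  assume f: "finite S" and p: "\<forall>s\<in>S. s > 0"
  have "Min S > 0" using False f p by auto
  moreover have "\<forall>s\<in>S. Min S \<le> s" using f by auto
  ultimately show ?thesis by (intro exI[of _ "Min S / 2"]) force
qed

definition ccw :: "real \<Rightarrow> real \<Rightarrow> real \<Rightarrow> bool" where
  "ccw d p q \<longleftrightarrow> q - p = d \<or> q - p = d - 2*pi"

definition Af :: "'a set \<Rightarrow> 'a set set \<Rightarrow> 'a set set \<Rightarrow> ('a \<Rightarrow> real) \<Rightarrow> real \<Rightarrow> 'a \<Rightarrow> real" where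
  "Af V Ep En D d v = (if \<exists>u\<in>V. {v,u}\<in>Ep \<and> ccw d (D v) (D u) then 1
     else if \<exists>u\<in>V. {v,u}\<in>En \<and> ccw d (D v) (D u) then -1 else 0)"

definition Bf :: "'a set \<Rightarrow> 'a set set \<Rightarrow> 'a set set \<Rightarrow> ('a \<Rightarrow> real) \<Rightarrow> real \<Rightarrow> 'a \<Rightarrow> real" where
  "Bf V Ep En D d v = (if \<exists>u\<in>V. {v,u}\<in>En \<and> ccw d (D u) (D v) then 1
     else if \<exists>u\<in>V. {v,u}\<in>Ep \<and> ccw d (D u) (D v) then -1 else 0)"

lemma Af_range: "-1 \<le> Af V Ep En D d v \<and> Af V Ep En D d v \<le> 1"
  unfolding Af_def by auto
lemma Bf_range: "-1 \<le> Bf V Ep En D d v \<and> Bf V Ep En D d v \<le> 1"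
  unfolding Bf_def by auto

lemma ccw_uniq1:
  assumes "ccw d p q" "ccw d p r" "q \<in> {0..<2*pi}" "r \<in> {0..<2*pi}"
  shows "q = r"
  using assms unfolding ccw_def by auto

lemma ccw_uniq2:
  assumes "ccw d q p" "ccw d r p" "q \<in> {0..<2*pi}" "r \<in> {0..<2*pi}"
  shows "q = r"
  using assms unfolding ccw_def by auto

theorem lemma2:
  fixes V :: "'a set" and Ep En :: "'a set set" and D :: "'a \<Rightarrow> real"
  assumes "signed_graph V Ep En"
    and "almost_valid_drawing V Ep En D"
  shows "\<exists>D'. valid_drawing V Ep En D'"
proof -
  have finV: "finite V" and sub: "\<And>e. e \<in> Ep \<union> En \<Longrightarrow> e \<subseteq> V" and disj: "Ep \<inter> En = {}"
    using assms(1) unfolding signed_graph_def by auto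
  have inj: "inj_on D V" and rng: "\<And>v. v \<in> V \<Longrightarrow> D v \<in> {0..<2*pi}"
    using assms(2) unfolding almost_valid_drawing_def drawing_def by auto
  obtain d where d0: "d > 0" and H: "\<And>i j k. i\<in>V \<Longrightarrow> j\<in>pos_nbrs Ep i \<Longrightarrow> k\<in>neg_nbrs En i \<Longrightarrow>
        circ_dist (D i) (D j) \<le> d \<and> d \<le> circ_dist (D i) (D k)"
    using assms(2) unfolding almost_valid_drawing_def by blast
  have memV: "\<And>i j. {i,j} \<in> Ep \<union> En \<Longrightarrow> i \<in> V \<and> j \<in> V" using sub by blast
  have notboth: "\<And>i j. {i,j} \<in> Ep \<Longrightarrow> {i,j} \<in> En \<Longrightarrow> False" using disj by blast
  define A where "A = Af V Ep En D d"
  define B where "B = Bf V Ep En D d"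
  define h where "h v = A v + B v + 2" for v
  have hr: "0 \<le> h v \<and> h v \<le> 4" for v
    using Af_range[of V Ep En D d v] Bf_range[of V Ep En D d v] unfolding h_def A_def B_def by auto
  define S1 where "S1 = (\<lambda>(i,j,k). circ_dist (D i) (D k) - circ_dist (D i) (D j)) `
     {(i,j,k). i\<in>V \<and> j\<in>V \<and> k\<in>V \<and> circ_dist (D i) (D j) < circ_dist (D i) (D k)}"
  define S2 where "S2 = (\<lambda>(u,v). \<bar>D u - D v\<bar>) ` {(u,v). u\<in>V \<and> v\<in>V \<and> u \<noteq> v}"
  define S3 where "S3 = (\<lambda>v. 2*pi - D v) ` V"
  define S4 where "S4 = {d} \<union> (if d < pi then {pi - d} else {})"
  have fS: "finite (S1 \<union> S2 \<union> S3 \<union> S4)"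
  proof -
    have "{(i,j,k). i\<in>V \<and> j\<in>V \<and> k\<in>V \<and> circ_dist (D i) (D j) < circ_dist (D i) (D k)} \<subseteq> V \<times> V \<times> V"
      by auto
    hence "finite S1" unfolding S1_def using finV by (meson finite_SigmaI finite_imageI finite_subset)
    moreover have "{(u,v). u\<in>V \<and> v\<in>V \<and> u \<noteq> v} \<subseteq> V \<times> V" by auto
    hence "finite S2" unfolding S2_def using finV by (meson finite_SigmaI finite_imageI finite_subset)
    ultimately show ?thesis unfolding S3_def S4_def using finV by auto
  qed
  have pS: "\<forall>s\<in>S1 \<union> S2 \<union> S3 \<union> S4. s > 0"
  proof -
    have "\<forall>s\<in>S2. s > 0" unfolding S2_def using inj by (auto simp: inj_on_def)
    moreover have "\<forall>s\<in>S3. s > 0" unfolding S3_def using rng by auto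
    ultimately show ?thesis unfolding S1_def S4_def using d0 by auto
  qed
  obtain e where e0: "e > 0" and eS: "\<And>s. s \<in> S1 \<union> S2 \<union> S3 \<union> S4 \<Longrightarrow> e < s"
    using fin_pos[OF fS pS] by blast
  define \<epsilon> where "\<epsilon> = e / 8"
  have eps0: "\<epsilon> > 0" using e0 unfolding \<epsilon>_def by auto
  define D' where "D' v = D v + \<epsilon> * h v" for v
  have hd: "\<bar>\<epsilon> * h a - \<epsilon> * h b\<bar> \<le> 4 * \<epsilon>" for a b
  proof -
    have "\<bar>h a - h b\<bar> \<le> 4" using hr[of a] hr[of b] by auto
    then have "\<epsilon> * \<bar>h a - h b\<bar> \<le> \<epsilon> * 4" using eps0 by (intro mult_left_mono) auto
    then show ?thesis using eps0 by (simp add: abs_mult right_diff_distrib[symmetric])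
  qed
  have drw: "drawing V D'"
    unfolding drawing_def
  proof
    show "inj_on D' V"
    proof (rule inj_onI, rule ccontr)
      fix u v assume uv: "u \<in> V" "v \<in> V" "D' u = D' v" "u \<noteq> v"
      have "\<bar>D u - D v\<bar> \<in> S2" unfolding S2_def using uv by force
      hence "e < \<bar>D u - D v\<bar>" using eS by blast
      moreover have "\<bar>D u - D v\<bar> = \<bar>\<epsilon> * h v - \<epsilon> * h u\<bar>" using uv(3) unfolding D'_def by argo
      ultimately show False using hd[of v u] unfolding \<epsilon>_def by linarith
    qed
    show "D' ` V \<subseteq> {0..<2 * pi}"
    proof
      fix x assume "x \<in> D' ` V"
      then obtain v where v: "v \<in> V" "x = D' v" by auto
      have "2*pi - D v \<in> S3" unfolding S3_def using v by auto
      hence "e < 2*pi - D v" using eS by blast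
      moreover have "0 \<le> \<epsilon> * h v" "\<epsilon> * h v \<le> \<epsilon> * 4" using hr[of v] eps0 by auto
      ultimately show "x \<in> {0..<2*pi}" using v rng[of v] unfolding D'_def \<epsilon>_def by auto
    qed
  qed
  have "valid_drawing V Ep En D'"
    unfolding valid_drawing_def
  proof (intro conjI drw ballI)
    fix i j k assume i: "i \<in> V" and j: "j \<in> pos_nbrs Ep i" and k: "k \<in> neg_nbrs En i"
    have ijE: "{i,j} \<in> Ep" and ikE: "{i,k} \<in> En" using j k unfolding pos_nbrs_def neg_nbrs_def by auto
    have jV: "j \<in> V" and kV: "k \<in> V" using memV ijE ikE by blast+
    have jk: "j \<noteq> k" using notboth ijE ikE by blast
    have DjDk: "D j \<noteq> D k" using inj jV kV jk by (auto simp: inj_on_def)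
    define d1 where "d1 = circ_dist (D i) (D j)"
    define d2 where "d2 = circ_dist (D i) (D k)"
    have d12: "d1 \<le> d" "d \<le> d2" using H[OF i j k] unfolding d1_def d2_def by auto
    have L1: "circ_dist (D' i) (D' j) \<le> d1 + 4*\<epsilon>"
      using cd_lip[of "D' i" "D' j" "D i" "D j"] hd[of i j] unfolding d1_def D'_def by auto
    have L2: "circ_dist (D' i) (D' k) \<ge> d2 - 4*\<epsilon>"
      using cd_lip[of "D' i" "D' k" "D i" "D k"] hd[of i k] unfolding d2_def D'_def by auto
    show "circ_dist (D' i) (D' j) < circ_dist (D' i) (D' k)"
    proof (cases "d1 < d2")
      case True
      have "d2 - d1 \<in> S1" unfolding S1_def d1_def d2_def using True i jV kV d1_def d2_def
        by (auto intro!: image_eqI[of _ _ "(i,j,k)"])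
      hence "e < d2 - d1" using eS by blast
      then show ?thesis using L1 L2 unfolding \<epsilon>_def by linarith
    next
      case False
      hence t1: "d1 = d" and t2: "d2 = d" using d12 by auto
      have dpi: "d < pi"
      proof (rule ccontr)
        assume "\<not> d < pi"
        hence "d = pi" using cd_le_pi[of "D i" "D j"] t1 unfolding d1_def by auto
        hence "\<bar>D i - D j\<bar> = pi" "\<bar>D i - D k\<bar> = pi"
          using cd_pi[of "D i" "D j"] cd_pi[of "D i" "D k"] t1 t2 rng i jV kV
          unfolding d1_def d2_def by auto
        then show False using DjDk rng[OF jV] rng[OF kV] rng[OF i] by (auto simp: abs_if split: if_splits)
      qed
      have "pi - d \<in> S4" "d \<in> S4" unfolding S4_def using dpi by auto
      hence epd: "8*\<epsilon> < pi - d" "8*\<epsilon> < d" using eS unfolding \<epsilon>_def by auto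
      have cj: "ccw d (D i) (D j) \<or> ccw d (D j) (D i)"
        using tight[of "D i" "D j" d] t1 dpi unfolding d1_def ccw_def by auto
      have ck: "ccw d (D i) (D k) \<or> ccw d (D k) (D i)"
        using tight[of "D i" "D k" d] t2 dpi unfolding d2_def ccw_def by auto
      have ex: "circ_dist (D' p) (D' q) = d + (\<epsilon> * h q - \<epsilon> * h p)" if "ccw d (D p) (D q)" for p q
      proof (rule cd_exact[of "D q" "D p" d])
        show "D q - D p = d \<or> D q - D p = d - 2 * pi" using that unfolding ccw_def .
        show "\<bar>\<epsilon> * h q - \<epsilon> * h p\<bar> < d" "\<bar>\<epsilon> * h q - \<epsilon> * h p\<bar> < pi - d"
          using hd[of q p] epd eps0 by auto
        show "D' q - D' p = D q - D p + (\<epsilon> * h q - \<epsilon> * h p)" unfolding D'_def by simp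
      qed (use d0 dpi in auto)
      have sw: "{j, i} = {i, j}" "{k,i} = {i,k}" by auto
      show ?thesis
      proof (cases "ccw d (D i) (D j)")
        case cij: True
        have cki: "ccw d (D k) (D i)"
          using ck cij ccw_uniq1[of d "D i" "D j" "D k"] rng jV kV DjDk by auto
        have "A i = 1" unfolding A_def Af_def using cij jV ijE by auto
        moreover have "B i = 1" unfolding B_def Bf_def using cki kV ikE by auto
        moreover have "B j = -1"
        proof -
          have "\<not> (\<exists>u\<in>V. {j,u}\<in>En \<and> ccw d (D u) (D j))"
          proof
            assume "\<exists>u\<in>V. {j,u}\<in>En \<and> ccw d (D u) (D j)"
            then obtain u where u: "u \<in> V" "{j,u}\<in>En" "ccw d (D u) (D j)" by blast
            have "D u = D i" using ccw_uniq2[OF u(3) cij] rng u(1) i by auto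
            hence "u = i" using inj u(1) i by (auto simp: inj_on_def)
            then show False using u(2) ijE notboth sw by auto
          qed
          moreover have "\<exists>u\<in>V. {j,u}\<in>Ep \<and> ccw d (D u) (D j)" using i ijE cij sw by (intro bexI[of _ i]) auto
          ultimately show ?thesis unfolding B_def Bf_def by auto
        qed
        moreover have "A k = -1"
        proof -
          have "\<not> (\<exists>u\<in>V. {k,u}\<in>Ep \<and> ccw d (D k) (D u))"
          proof
            assume "\<exists>u\<in>V. {k,u}\<in>Ep \<and> ccw d (D k) (D u)"
            then obtain u where u: "u \<in> V" "{k,u}\<in>Ep" "ccw d (D k) (D u)" by blast
            have "D u = D i" using ccw_uniq1[OF u(3) cki] rng u(1) i by auto
            hence "u = i" using inj u(1) i by (auto simp: inj_on_def)
            then show False using u(2) ikE notboth sw by auto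
          qed
          moreover have "\<exists>u\<in>V. {k,u}\<in>En \<and> ccw d (D k) (D u)" using i ikE cki sw by (intro bexI[of _ i]) auto
          ultimately show ?thesis unfolding A_def Af_def by auto
        qed
        ultimately have "h i = 4" "h j \<le> 2" "h k \<le> 2"
          unfolding h_def using Af_range[of V Ep En D d j] Bf_range[of V Ep En D d k]
          unfolding A_def B_def by auto
        then have "\<epsilon> * h j \<le> \<epsilon> * h i - 2*\<epsilon>" "\<epsilon> * h k \<le> \<epsilon> * h i - 2*\<epsilon>"
          using eps0 by (auto intro: mult_left_mono simp: algebra_simps)
        then show ?thesis using ex[OF cij] ex[OF cki] cd_comm[of "D' k" "D' i"] eps0 by linarith
      next
        case cij: False
        hence cji: "ccw d (D j) (D i)" using cj by auto
        have cik: "ccw d (D i) (D k)"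
          using ck cji ccw_uniq2[of d "D j" "D i" "D k"] rng jV kV DjDk by auto
        have "A i = -1"
        proof -
          have "\<not> (\<exists>u\<in>V. {i,u}\<in>Ep \<and> ccw d (D i) (D u))"
          proof
            assume "\<exists>u\<in>V. {i,u}\<in>Ep \<and> ccw d (D i) (D u)"
            then obtain u where u: "u \<in> V" "{i,u}\<in>Ep" "ccw d (D i) (D u)" by blast
            have "D u = D k" using ccw_uniq1[OF u(3) cik] rng u(1) kV by auto
            hence "u = k" using inj u(1) kV by (auto simp: inj_on_def)
            then show False using u(2) ikE notboth by auto
          qed
          then show ?thesis unfolding A_def Af_def using kV ikE cik by auto
        qed
        moreover have "B i = -1"
        proof -
          have "\<not> (\<exists>u\<in>V. {i,u}\<in>En \<and> ccw d (D u) (D i))"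
          proof
            assume "\<exists>u\<in>V. {i,u}\<in>En \<and> ccw d (D u) (D i)"
            then obtain u where u: "u \<in> V" "{i,u}\<in>En" "ccw d (D u) (D i)" by blast
            have "D u = D j" using ccw_uniq2[OF u(3) cji] rng u(1) jV by auto
            hence "u = j" using inj u(1) jV by (auto simp: inj_on_def)
            then show False using u(2) ijE notboth by auto
          qed
          then show ?thesis unfolding B_def Bf_def using jV ijE cji by auto
        qed
        moreover have "A j = 1"
        proof -
          have "\<exists>u\<in>V. {j,u}\<in>Ep \<and> ccw d (D j) (D u)" using cji i ijE sw by (intro bexI[of _ i]) auto
          then show ?thesis unfolding A_def Af_def by auto
        qed
        moreover have "B k = 1"
        proof -
          have "\<exists>u\<in>V. {k,u}\<in>En \<and> ccw d (D u) (D k)" using cik i ikE sw by (intro bexI[of _ i]) auto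
          then show ?thesis unfolding B_def Bf_def by auto
        qed
        ultimately have "h i = 0" "h j \<ge> 2" "h k \<ge> 2"
          unfolding h_def using Bf_range[of V Ep En D d j] Af_range[of V Ep En D d k]
          unfolding A_def B_def by auto
        then have "\<epsilon> * h j \<ge> \<epsilon> * h i + 2*\<epsilon>" "\<epsilon> * h k \<ge> \<epsilon> * h i + 2*\<epsilon>"
          using eps0 by (auto intro: mult_left_mono simp: algebra_simps)
        then show ?thesis using ex[OF cji] ex[OF cik] cd_comm[of "D' j" "D' i"] eps0 by linarith
      qed
    qed
  qed
  then show ?thesis by blast
qed

end
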